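(* Let $G$ be a connected graph in $\mathcal{C}$. If $G$ contains an induced cycle of length 7, then $G$ has at most 21 vertices.
   Context: $\mathcal{C}=\mathrm{Free}(\text{claw}, 4K_1, \text{5-wheel}, C_5\text{-twin}, P_5\text{-twin}, K_5-e)$, where $\mathrm{Free}(L)$ is the class of graphs with no induced subgraph isomorphic to a member of $L$; the claw is $K_{1,3}$; $4K_1$ is the edgeless graph on 4 vertices; the 5-wheel is $C_5$ plus a vertex adjacent to all five cycle vertices; the $C_5$-twin is $C_5$ plus a new vertex adjacent to one cycle vertex $v$ and both cycle-neighbours of $v$; the $P_5$-twin is a path $p_1p_2p_3p_4p_5$ plus a new vertex adjacent to exactly $p_2,p_3,p_4$; $K_5-e$ is $K_5$ minus one edge. *)

theory Defs
  imports Main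
begin

definition sgraph :: "'a set \<Rightarrow> ('a \<Rightarrow> 'a \<Rightarrow> bool) \<Rightarrow> bool" where
  "sgraph V E \<longleftrightarrow> finite V \<and> (\<forall>x y. E x y \<longrightarrow> x \<in> V \<and> y \<in> V)
     \<and> (\<forall>x y. E x y \<longrightarrow> E y x) \<and> (\<forall>x. \<not> E x x)"

definition connected_graph :: "'a set \<Rightarrow> ('a \<Rightarrow> 'a \<Rightarrow> bool) \<Rightarrow> bool" where
  "connected_graph V E \<longleftrightarrow>
     (\<forall>u\<in>V. \<forall>v\<in>V. (\<lambda>x y. x \<in> V \<and> y \<in> V \<and> E x y)\<^sup>*\<^sup>* u v)"

definition has_induced :: "'a set \<Rightarrow> ('a \<Rightarrow> 'a \<Rightarrow> bool) \<Rightarrow> nat \<Rightarrow> (nat \<Rightarrow> nat \<Rightarrow> bool) \<Rightarrow> bool" where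
  "has_induced V E n A \<longleftrightarrow> (\<exists>f. inj_on f {0..<n} \<and> f ` {0..<n} \<subseteq> V \<and>
     (\<forall>i\<in>{0..<n}. \<forall>j\<in>{0..<n}. E (f i) (f j) \<longleftrightarrow> A i j))"

definition cycle_adj :: "nat \<Rightarrow> nat \<Rightarrow> nat \<Rightarrow> bool" where
  "cycle_adj k i j \<longleftrightarrow> j = (i + 1) mod k \<or> i = (j + 1) mod k"

definition claw_adj :: "nat \<Rightarrow> nat \<Rightarrow> bool" where
  "claw_adj i j \<longleftrightarrow> i \<noteq> j \<and> (i = 0 \<or> j = 0)"

definition empty_adj :: "nat \<Rightarrow> nat \<Rightarrow> bool" where
  "empty_adj i j \<longleftrightarrow> False"

definition wheel5_adj :: "nat \<Rightarrow> nat \<Rightarrow> bool" where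
  "wheel5_adj i j \<longleftrightarrow> (i < 5 \<and> j < 5 \<and> cycle_adj 5 i j) \<or> (i \<noteq> j \<and> (i = 5 \<or> j = 5))"

definition c5twin_adj :: "nat \<Rightarrow> nat \<Rightarrow> bool" where
  "c5twin_adj i j \<longleftrightarrow> (i < 5 \<and> j < 5 \<and> cycle_adj 5 i j)
     \<or> (i = 5 \<and> j \<in> {0, 1, 4}) \<or> (j = 5 \<and> i \<in> {0, 1, 4})"

definition p5twin_adj :: "nat \<Rightarrow> nat \<Rightarrow> bool" where
  "p5twin_adj i j \<longleftrightarrow> (i < 5 \<and> j < 5 \<and> (j = i + 1 \<or> i = j + 1))
     \<or> (i = 5 \<and> j \<in> {1, 2, 3}) \<or> (j = 5 \<and> i \<in> {1, 2, 3})"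

definition k5e_adj :: "nat \<Rightarrow> nat \<Rightarrow> bool" where
  "k5e_adj i j \<longleftrightarrow> i \<noteq> j \<and> {i, j} \<noteq> {0, 1}"

definition in_class_C :: "'a set \<Rightarrow> ('a \<Rightarrow> 'a \<Rightarrow> bool) \<Rightarrow> bool" where
  "in_class_C V E \<longleftrightarrow>
     \<not> has_induced V E 4 claw_adj \<and>
     \<not> has_induced V E 4 empty_adj \<and>
     \<not> has_induced V E 6 wheel5_adj \<and>
     \<not> has_induced V E 6 c5twin_adj \<and>
     \<not> has_induced V E 6 p5twin_adj \<and>
     \<not> has_induced V E 5 k5e_adj"

end

theory Submission
  imports Defs
begin

fun pn :: "nat \<Rightarrow> nat" where
  "pn p = (if p = 0 then 4 else if p = 1 then 4 else if p = 2 then 6 else if p = 3 then 6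
           else if p = 4 then 6 else 5)"

fun pA :: "nat \<Rightarrow> nat \<Rightarrow> nat \<Rightarrow> bool" where
  "pA p = (if p = 0 then claw_adj else if p = 1 then empty_adj else if p = 2 then wheel5_adj
           else if p = 3 then c5twin_adj else if p = 4 then p5twin_adj else k5e_adj)"

definition ok_wit :: "nat \<Rightarrow> (nat \<Rightarrow> nat \<Rightarrow> bool) \<Rightarrow> nat \<Rightarrow> nat list \<Rightarrow> bool" where
  "ok_wit N H p xs \<longleftrightarrow> p < 6 \<and> length xs = pn p \<and> distinct xs \<and> list_all (\<lambda>x. x < N) xs \<and>
     list_all (\<lambda>i. list_all (\<lambda>j. H (xs!i) (xs!j) = pA p i j) [0..<pn p]) [0..<pn p]"

definition Hv :: "bool list \<Rightarrow> nat \<Rightarrow> nat \<Rightarrow> bool" where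
  "Hv bl i j = (if i < 7 \<and> j < 7 then cycle_adj 7 i j
      else if i = 7 \<and> j < 7 then bl ! j else if j = 7 \<and> i < 7 then bl ! i else False)"

definition H2 :: "bool list \<Rightarrow> bool \<Rightarrow> nat \<Rightarrow> nat \<Rightarrow> bool" where
  "H2 bl e i j = (if i < 7 \<and> j < 7 then cycle_adj 7 i j
      else if 7 \<le> i \<and> i < 9 \<and> j < 7 then bl ! j else if 7 \<le> j \<and> j < 9 \<and> i < 7 then bl ! i
      else if (i = 7 \<and> j = 8) \<or> (i = 8 \<and> j = 7) then e else False)"

fun allbl :: "nat \<Rightarrow> bool list list" where
  "allbl 0 = [[]]"
| "allbl (Suc n) = concat (map (\<lambda>l. [True # l, False # l]) (allbl n))"

lemma set_allbl: "set (allbl n) = {l. length l = n}"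
proof (induction n)
  case 0 then show ?case by auto
next
  case (Suc n)
  show ?case
  proof
    show "set (allbl (Suc n)) \<subseteq> {l. length l = Suc n}" using Suc by auto
    show "{l. length l = Suc n} \<subseteq> set (allbl (Suc n))"
    proof
      fix l :: "bool list" assume "l \<in> {l. length l = Suc n}"
      then obtain b t where "l = b # t" "length t = n" by (cases l) auto
      then show "l \<in> set (allbl (Suc n))" using Suc by (cases b) auto
    qed
  qed
qed

definition goods :: "bool list list" where "goods = [[True,True,True,True,False,False,False],
 [True,True,False,True,True,False,False],
 [False,True,True,True,True,False,False],
 [True,True,False,False,True,True,False],
 [False,True,True,False,True,True,False],
 [False,False,True,True,True,True,False],
 [True,True,True,False,False,False,True],
 [True,False,True,True,False,False,True],
 [True,False,False,True,True,False,True],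
 [True,True,False,False,False,True,True],
 [False,True,True,False,False,True,True],
 [False,False,True,True,False,True,True],
 [True,False,False,False,True,True,True],
 [False,False,False,True,True,True,True]]"

definition tab1 :: "(bool list * (nat * nat list)) list" where "tab1 = [([False,False,False,False,False,False,False],(1::nat,[0, 2, 4, 7])),
 ([True,False,False,False,False,False,False],(0::nat,[0, 1, 6, 7])),
 ([False,True,False,False,False,False,False],(0::nat,[1, 0, 2, 7])),
 ([True,True,False,False,False,False,False],(1::nat,[2, 4, 6, 7])),
 ([False,False,True,False,False,False,False],(0::nat,[2, 1, 3, 7])),
 ([True,False,True,False,False,False,False],(0::nat,[0, 1, 6, 7])),
 ([False,True,True,False,False,False,False],(1::nat,[0, 3, 5, 7])),
 ([True,True,True,False,False,False,False],(4::nat,[3, 2, 1, 0, 6, 7])),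
 ([False,False,False,True,False,False,False],(0::nat,[3, 2, 4, 7])),
 ([True,False,False,True,False,False,False],(0::nat,[0, 1, 6, 7])),
 ([False,True,False,True,False,False,False],(0::nat,[1, 0, 2, 7])),
 ([True,True,False,True,False,False,False],(0::nat,[3, 2, 4, 7])),
 ([False,False,True,True,False,False,False],(1::nat,[1, 4, 6, 7])),
 ([True,False,True,True,False,False,False],(0::nat,[0, 1, 6, 7])),
 ([False,True,True,True,False,False,False],(4::nat,[0, 1, 2, 3, 4, 7])),
 ([False,False,False,False,True,False,False],(0::nat,[4, 3, 5, 7])),
 ([True,False,False,False,True,False,False],(0::nat,[0, 1, 6, 7])),
 ([False,True,False,False,True,False,False],(0::nat,[1, 0, 2, 7])),
 ([True,True,False,False,True,False,False],(0::nat,[4, 3, 5, 7])),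
 ([False,False,True,False,True,False,False],(0::nat,[2, 1, 3, 7])),
 ([True,False,True,False,True,False,False],(0::nat,[0, 1, 6, 7])),
 ([False,True,True,False,True,False,False],(0::nat,[4, 3, 5, 7])),
 ([True,True,True,False,True,False,False],(0::nat,[4, 3, 5, 7])),
 ([False,False,False,True,True,False,False],(1::nat,[0, 2, 5, 7])),
 ([True,False,False,True,True,False,False],(0::nat,[0, 1, 6, 7])),
 ([False,True,False,True,True,False,False],(0::nat,[1, 0, 2, 7])),
 ([False,False,True,True,True,False,False],(4::nat,[1, 2, 3, 4, 5, 7])),
 ([True,False,True,True,True,False,False],(0::nat,[0, 1, 6, 7])),
 ([True,True,True,True,True,False,False],(0::nat,[7, 0, 2, 4])),
 ([False,False,False,False,False,True,False],(0::nat,[5, 4, 6, 7])),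
 ([True,False,False,False,False,True,False],(0::nat,[0, 1, 6, 7])),
 ([False,True,False,False,False,True,False],(0::nat,[1, 0, 2, 7])),
 ([True,True,False,False,False,True,False],(0::nat,[5, 4, 6, 7])),
 ([False,False,True,False,False,True,False],(0::nat,[2, 1, 3, 7])),
 ([True,False,True,False,False,True,False],(0::nat,[0, 1, 6, 7])),
 ([False,True,True,False,False,True,False],(0::nat,[5, 4, 6, 7])),
 ([True,True,True,False,False,True,False],(0::nat,[5, 4, 6, 7])),
 ([False,False,False,True,False,True,False],(0::nat,[3, 2, 4, 7])),
 ([True,False,False,True,False,True,False],(0::nat,[0, 1, 6, 7])),
 ([False,True,False,True,False,True,False],(0::nat,[1, 0, 2, 7])),
 ([True,True,False,True,False,True,False],(0::nat,[3, 2, 4, 7])),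
 ([False,False,True,True,False,True,False],(0::nat,[5, 4, 6, 7])),
 ([True,False,True,True,False,True,False],(0::nat,[0, 1, 6, 7])),
 ([False,True,True,True,False,True,False],(0::nat,[5, 4, 6, 7])),
 ([True,True,True,True,False,True,False],(0::nat,[5, 4, 6, 7])),
 ([False,False,False,False,True,True,False],(1::nat,[1, 3, 6, 7])),
 ([True,False,False,False,True,True,False],(0::nat,[0, 1, 6, 7])),
 ([False,True,False,False,True,True,False],(0::nat,[1, 0, 2, 7])),
 ([False,False,True,False,True,True,False],(0::nat,[2, 1, 3, 7])),
 ([True,False,True,False,True,True,False],(0::nat,[0, 1, 6, 7])),
 ([True,True,True,False,True,True,False],(0::nat,[7, 0, 2, 4])),
 ([False,False,False,True,True,True,False],(4::nat,[2, 3, 4, 5, 6, 7])),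
 ([True,False,False,True,True,True,False],(0::nat,[0, 1, 6, 7])),
 ([False,True,False,True,True,True,False],(0::nat,[1, 0, 2, 7])),
 ([True,True,False,True,True,True,False],(0::nat,[7, 0, 3, 5])),
 ([True,False,True,True,True,True,False],(0::nat,[0, 1, 6, 7])),
 ([False,True,True,True,True,True,False],(0::nat,[7, 1, 3, 5])),
 ([True,True,True,True,True,True,False],(0::nat,[7, 0, 2, 4])),
 ([False,False,False,False,False,False,True],(0::nat,[6, 0, 5, 7])),
 ([True,False,False,False,False,False,True],(1::nat,[1, 3, 5, 7])),
 ([False,True,False,False,False,False,True],(0::nat,[1, 0, 2, 7])),
 ([True,True,False,False,False,False,True],(4::nat,[2, 1, 0, 6, 5, 7])),
 ([False,False,True,False,False,False,True],(0::nat,[2, 1, 3, 7])),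
 ([True,False,True,False,False,False,True],(0::nat,[2, 1, 3, 7])),
 ([False,True,True,False,False,False,True],(0::nat,[6, 0, 5, 7])),
 ([False,False,False,True,False,False,True],(0::nat,[3, 2, 4, 7])),
 ([True,False,False,True,False,False,True],(0::nat,[3, 2, 4, 7])),
 ([False,True,False,True,False,False,True],(0::nat,[1, 0, 2, 7])),
 ([True,True,False,True,False,False,True],(0::nat,[3, 2, 4, 7])),
 ([False,False,True,True,False,False,True],(0::nat,[6, 0, 5, 7])),
 ([False,True,True,True,False,False,True],(0::nat,[6, 0, 5, 7])),
 ([True,True,True,True,False,False,True],(0::nat,[7, 1, 3, 6])),
 ([False,False,False,False,True,False,True],(0::nat,[4, 3, 5, 7])),
 ([True,False,False,False,True,False,True],(0::nat,[4, 3, 5, 7])),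
 ([False,True,False,False,True,False,True],(0::nat,[1, 0, 2, 7])),
 ([True,True,False,False,True,False,True],(0::nat,[4, 3, 5, 7])),
 ([False,False,True,False,True,False,True],(0::nat,[2, 1, 3, 7])),
 ([True,False,True,False,True,False,True],(0::nat,[2, 1, 3, 7])),
 ([False,True,True,False,True,False,True],(0::nat,[4, 3, 5, 7])),
 ([True,True,True,False,True,False,True],(0::nat,[4, 3, 5, 7])),
 ([False,False,False,True,True,False,True],(0::nat,[6, 0, 5, 7])),
 ([False,True,False,True,True,False,True],(0::nat,[1, 0, 2, 7])),
 ([True,True,False,True,True,False,True],(0::nat,[7, 1, 3, 6])),
 ([False,False,True,True,True,False,True],(0::nat,[6, 0, 5, 7])),
 ([True,False,True,True,True,False,True],(0::nat,[7, 0, 2, 4])),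
 ([False,True,True,True,True,False,True],(0::nat,[6, 0, 5, 7])),
 ([True,True,True,True,True,False,True],(0::nat,[7, 0, 2, 4])),
 ([False,False,False,False,False,True,True],(1::nat,[0, 2, 4, 7])),
 ([True,False,False,False,False,True,True],(4::nat,[1, 0, 6, 5, 4, 7])),
 ([False,True,False,False,False,True,True],(0::nat,[1, 0, 2, 7])),
 ([False,False,True,False,False,True,True],(0::nat,[2, 1, 3, 7])),
 ([True,False,True,False,False,True,True],(0::nat,[2, 1, 3, 7])),
 ([True,True,True,False,False,True,True],(0::nat,[7, 0, 2, 5])),
 ([False,False,False,True,False,True,True],(0::nat,[3, 2, 4, 7])),
 ([True,False,False,True,False,True,True],(0::nat,[3, 2, 4, 7])),
 ([False,True,False,True,False,True,True],(0::nat,[1, 0, 2, 7])),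
 ([True,True,False,True,False,True,True],(0::nat,[3, 2, 4, 7])),
 ([True,False,True,True,False,True,True],(0::nat,[7, 0, 2, 5])),
 ([False,True,True,True,False,True,True],(0::nat,[7, 1, 3, 5])),
 ([True,True,True,True,False,True,True],(0::nat,[7, 0, 2, 5])),
 ([False,False,False,False,True,True,True],(4::nat,[0, 6, 5, 4, 3, 7])),
 ([False,True,False,False,True,True,True],(0::nat,[1, 0, 2, 7])),
 ([True,True,False,False,True,True,True],(0::nat,[7, 1, 4, 6])),
 ([False,False,True,False,True,True,True],(0::nat,[2, 1, 3, 7])),
 ([True,False,True,False,True,True,True],(0::nat,[2, 1, 3, 7])),
 ([False,True,True,False,True,True,True],(0::nat,[7, 1, 4, 6])),
 ([True,True,True,False,True,True,True],(0::nat,[7, 0, 2, 4])),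
 ([True,False,False,True,True,True,True],(0::nat,[7, 0, 3, 5])),
 ([False,True,False,True,True,True,True],(0::nat,[1, 0, 2, 7])),
 ([True,True,False,True,True,True,True],(0::nat,[7, 0, 3, 5])),
 ([False,False,True,True,True,True,True],(0::nat,[7, 2, 4, 6])),
 ([True,False,True,True,True,True,True],(0::nat,[7, 0, 2, 4])),
 ([False,True,True,True,True,True,True],(0::nat,[7, 1, 3, 5])),
 ([True,True,True,True,True,True,True],(0::nat,[7, 0, 2, 4]))]"

definition tab2 :: "((bool list * bool) * (nat * nat list)) list" where "tab2 = [(([True,True,True,True,False,False,False],True),(4::nat,[4, 3, 7, 0, 6, 8])),
 (([True,True,True,True,False,False,False],False),(0::nat,[0, 6, 7, 8])),
 (([True,True,False,True,True,False,False],True),(3::nat,[7, 0, 6, 5, 4, 8])),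
 (([True,True,False,True,True,False,False],False),(0::nat,[0, 6, 7, 8])),
 (([False,True,True,True,True,False,False],True),(4::nat,[0, 1, 7, 4, 5, 8])),
 (([False,True,True,True,True,False,False],False),(0::nat,[1, 0, 7, 8])),
 (([True,True,False,False,True,True,False],True),(3::nat,[7, 1, 2, 3, 4, 8])),
 (([True,True,False,False,True,True,False],False),(0::nat,[0, 6, 7, 8])),
 (([False,True,True,False,True,True,False],True),(3::nat,[7, 1, 0, 6, 5, 8])),
 (([False,True,True,False,True,True,False],False),(0::nat,[1, 0, 7, 8])),
 (([False,False,True,True,True,True,False],True),(4::nat,[1, 2, 7, 5, 6, 8])),
 (([False,False,True,True,True,True,False],False),(0::nat,[2, 1, 7, 8])),
 (([True,True,True,False,False,False,True],True),(4::nat,[3, 2, 7, 6, 5, 8])),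
 (([True,True,True,False,False,False,True],False),(0::nat,[2, 3, 7, 8])),
 (([True,False,True,True,False,False,True],True),(3::nat,[7, 3, 4, 5, 6, 8])),
 (([True,False,True,True,False,False,True],False),(0::nat,[0, 1, 7, 8])),
 (([True,False,False,True,True,False,True],True),(3::nat,[7, 0, 1, 2, 3, 8])),
 (([True,False,False,True,True,False,True],False),(0::nat,[0, 1, 7, 8])),
 (([True,True,False,False,False,True,True],True),(4::nat,[2, 1, 7, 5, 4, 8])),
 (([True,True,False,False,False,True,True],False),(0::nat,[1, 2, 7, 8])),
 (([False,True,True,False,False,True,True],True),(3::nat,[7, 2, 3, 4, 5, 8])),
 (([False,True,True,False,False,True,True],False),(0::nat,[1, 0, 7, 8])),
 (([False,False,True,True,False,True,True],True),(3::nat,[7, 2, 1, 0, 6, 8])),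
 (([False,False,True,True,False,True,True],False),(0::nat,[2, 1, 7, 8])),
 (([True,False,False,False,True,True,True],True),(4::nat,[1, 0, 7, 4, 3, 8])),
 (([True,False,False,False,True,True,True],False),(0::nat,[0, 1, 7, 8])),
 (([False,False,False,True,True,True,True],True),(4::nat,[0, 6, 7, 3, 2, 8])),
 (([False,False,False,True,True,True,True],False),(0::nat,[3, 2, 7, 8]))]"

definition wit1 :: "bool list \<Rightarrow> nat \<times> nat list" where
  "wit1 bl = (case map_of tab1 bl of Some w \<Rightarrow> w | None \<Rightarrow> (0, []))"

definition wit2 :: "bool list \<Rightarrow> bool \<Rightarrow> nat \<times> nat list" where
  "wit2 bl e = (case map_of tab2 (bl, e) of Some w \<Rightarrow> w | None \<Rightarrow> (0, []))"

lemma comp1: "list_all (\<lambda>bl. bl \<in> set goods \<or> ok_wit 8 (Hv bl) (fst (wit1 bl)) (snd (wit1 bl))) (allbl 7)"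
  by code_simp

lemma comp2: "list_all (\<lambda>bl. list_all (\<lambda>e. ok_wit 9 (H2 bl e) (fst (wit2 bl e)) (snd (wit2 bl e))) [True, False]) goods"
  by code_simp

lemma no_pat:
  assumes "in_class_C V E" "p < 6"
  shows "\<not> has_induced V E (pn p) (pA p)"
proof -
  have "p = 0 \<or> p = 1 \<or> p = 2 \<or> p = 3 \<or> p = 4 \<or> p = 5" using assms(2) by auto
  then show ?thesis using assms(1) unfolding in_class_C_def by auto
qed

lemma transfer:
  assumes inj: "inj_on g {0..<N}" and sub: "g ` {0..<N} \<subseteq> V"
    and adj: "\<And>i j. i < N \<Longrightarrow> j < N \<Longrightarrow> E (g i) (g j) = H i j"
    and ok: "ok_wit N H p xs"
  shows "has_induced V E (pn p) (pA p)"
proof -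
  from ok have len: "length xs = pn p" and dis: "distinct xs" and lt: "\<forall>x\<in>set xs. x < N"
    and pr: "\<forall>i\<in>set [0..<pn p]. \<forall>j\<in>set [0..<pn p]. H (xs!i) (xs!j) = pA p i j"
    unfolding ok_wit_def list_all_iff by auto
  define f where "f = (\<lambda>i. g (xs ! i))"
  have inn: "\<And>i. i < pn p \<Longrightarrow> xs ! i < N" using lt len by auto
  have "inj_on f {0..<pn p}"
  proof (rule inj_onI)
    fix i j assume i: "i \<in> {0..<pn p}" and j: "j \<in> {0..<pn p}" and "f i = f j"
    then have "xs ! i = xs ! j" using inj inn unfolding f_def inj_on_def by auto
    then show "i = j" using dis i j len by (simp add: nth_eq_iff_index_eq)
  qed
  moreover have "f ` {0..<pn p} \<subseteq> V" using sub inn unfolding f_def by auto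
  moreover have "\<forall>i\<in>{0..<pn p}. \<forall>j\<in>{0..<pn p}. E (f i) (f j) \<longleftrightarrow> pA p i j"
    using pr adj inn unfolding f_def by auto
  ultimately show ?thesis unfolding has_induced_def by blast
qed

theorem claim2:
  fixes V :: "'a set" and E :: "'a \<Rightarrow> 'a \<Rightarrow> bool"
  assumes "sgraph V E"
    and "connected_graph V E"
    and "in_class_C V E"
    and "has_induced V E 7 (cycle_adj 7)"
  shows "card V \<le> 21"
proof -
  have fin: "finite V" and sym: "\<And>x y. E x y \<Longrightarrow> E y x" and irr: "\<And>x. \<not> E x x"
    using assms(1) unfolding sgraph_def by auto
  obtain f where finj: "inj_on f {0..<7}" and fsub: "f ` {0..<7} \<subseteq> V"
    and fadj: "\<And>i j. i < 7 \<Longrightarrow> j < 7 \<Longrightarrow> E (f i) (f j) = cycle_adj 7 i j"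
    using assms(4) unfolding has_induced_def by auto
  define Cs where "Cs = f ` {0..<7}"
  define T where "T = (\<lambda>v. map (\<lambda>i. E v (f i)) [0..<7])"
  have Tnth: "\<And>v j. j < 7 \<Longrightarrow> T v ! j = E v (f j)" unfolding T_def by simp
  have Tgood: "T v \<in> set goods" if v: "v \<in> V - Cs" for v
  proof (rule ccontr)
    assume ng: "T v \<notin> set goods"
    have "length (T v) = 7" unfolding T_def by simp
    then have "T v \<in> set (allbl 7)" using set_allbl by blast
    then have okw: "ok_wit 8 (Hv (T v)) (fst (wit1 (T v))) (snd (wit1 (T v)))"
      using comp1 ng unfolding list_all_iff by blast
    define g where "g = (\<lambda>i::nat. if i < 7 then f i else v)"
    have gi: "inj_on g {0..<8}"
      using finj v unfolding g_def inj_on_def Cs_def by (auto split: if_splits)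
    have gs: "g ` {0..<8} \<subseteq> V" using fsub v unfolding g_def Cs_def by auto
    have ga: "\<And>i j. i < 8 \<Longrightarrow> j < 8 \<Longrightarrow> E (g i) (g j) = Hv (T v) i j"
    proof -
      fix i j :: nat assume "i < 8" "j < 8"
      then have "i < 7 \<or> i = 7" "j < 7 \<or> j = 7" by auto
      then show "E (g i) (g j) = Hv (T v) i j"
      proof (elim disjE)
        assume "i < 7" "j < 7" then show ?thesis unfolding g_def Hv_def using fadj by simp
      next
        assume "i < 7" "j = 7" then show ?thesis unfolding g_def Hv_def using Tnth[of i v] sym by auto
      next
        assume "i = 7" "j < 7" then show ?thesis unfolding g_def Hv_def using Tnth[of j v] by auto
      next
        assume "i = 7" "j = 7" then show ?thesis unfolding g_def Hv_def using irr by auto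
      qed
    qed
    have "has_induced V E (pn (fst (wit1 (T v)))) (pA (fst (wit1 (T v))))"
      by (rule transfer[OF gi gs ga okw])
    moreover have "fst (wit1 (T v)) < 6" using okw unfolding ok_wit_def by simp
    ultimately show False using no_pat assms(3) by blast
  qed
  have Tinj: "inj_on T (V - Cs)"
  proof (rule inj_onI, rule ccontr)
    fix u w assume u: "u \<in> V - Cs" and w: "w \<in> V - Cs" and eq: "T u = T w" and ne: "u \<noteq> w"
    define e where "e = E u w"
    have okw: "ok_wit 9 (H2 (T u) e) (fst (wit2 (T u) e)) (snd (wit2 (T u) e))"
    proof -
      have "\<forall>e\<in>set [True, False]. ok_wit 9 (H2 (T u) e) (fst (wit2 (T u) e)) (snd (wit2 (T u) e))"
        using comp2 Tgood[OF u] unfolding list_all_iff by blast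
      moreover have "e \<in> set [True, False]" by (cases e) simp_all
      ultimately show ?thesis by blast
    qed
    define g where "g = (\<lambda>i::nat. if i < 7 then f i else if i = 7 then u else w)"
    have gi: "inj_on g {0..<9}"
    proof (rule inj_onI)
      fix i j assume i: "i \<in> {0..<9::nat}" and j: "j \<in> {0..<9::nat}" and gij: "g i = g j"
      have ui: "\<And>k. k < 7 \<Longrightarrow> f k \<noteq> u" using u unfolding Cs_def by auto
      have wi: "\<And>k. k < 7 \<Longrightarrow> f k \<noteq> w" using w unfolding Cs_def by auto
      from i j have "i < 7 \<or> i = 7 \<or> i = 8" "j < 7 \<or> j = 7 \<or> j = 8" by auto
      then show "i = j"
      proof (elim disjE)
        assume "i < 7" "j < 7" then show ?thesis using gij finj unfolding g_def inj_on_def by simp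
      qed (use gij ui wi ne in \<open>auto simp: g_def\<close>)
    qed
    have gs: "g ` {0..<9} \<subseteq> V" using fsub u w unfolding g_def Cs_def by auto
    have ga: "\<And>i j. i < 9 \<Longrightarrow> j < 9 \<Longrightarrow> E (g i) (g j) = H2 (T u) e i j"
    proof -
      fix i j :: nat assume "i < 9" "j < 9"
      then have "i < 7 \<or> i = 7 \<or> i = 8" "j < 7 \<or> j = 7 \<or> j = 8" by auto
      then show "E (g i) (g j) = H2 (T u) e i j"
      proof (elim disjE)
        assume "i < 7" "j < 7" then show ?thesis unfolding g_def H2_def using fadj by simp
      next
        assume "i < 7" "j = 7" then show ?thesis unfolding g_def H2_def using Tnth[of i u] sym by auto
      next
        assume "i < 7" "j = 8" then show ?thesis unfolding g_def H2_def using Tnth[of i w] eq sym by auto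
      next
        assume "i = 7" "j < 7" then show ?thesis unfolding g_def H2_def using Tnth[of j u] by auto
      next
        assume "i = 8" "j < 7" then show ?thesis unfolding g_def H2_def using Tnth[of j w] eq by auto
      next
        assume "i = 7" "j = 7" then show ?thesis unfolding g_def H2_def using irr by auto
      next
        assume "i = 8" "j = 8" then show ?thesis unfolding g_def H2_def using irr by auto
      next
        assume "i = 7" "j = 8" then show ?thesis unfolding g_def H2_def e_def using ne by auto
      next
        assume "i = 8" "j = 7" then show ?thesis unfolding g_def H2_def e_def using ne sym by auto
      qed
    qed
    have "has_induced V E (pn (fst (wit2 (T u) e))) (pA (fst (wit2 (T u) e)))"
      by (rule transfer[OF gi gs ga okw])
    moreover have "fst (wit2 (T u) e) < 6" using okw unfolding ok_wit_def by simp
    ultimately show False using no_pat assms(3) by blast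
  qed
  have c1: "card (V - Cs) \<le> 14"
  proof -
    have "card (V - Cs) = card (T ` (V - Cs))" using Tinj by (simp add: card_image)
    also have "\<dots> \<le> card (set goods)" using Tgood by (intro card_mono) auto
    also have "\<dots> \<le> length goods" by (rule card_length)
    also have "\<dots> = 14" unfolding goods_def by simp
    finally show ?thesis .
  qed
  have c2: "card Cs = 7" unfolding Cs_def using finj by (simp add: card_image)
  have "card V \<le> card Cs + card (V - Cs)"
  proof -
    have cs: "Cs \<subseteq> V" using fsub Cs_def by simp
    have "finite Cs" using fin cs finite_subset by blast
    then have "card (V - Cs) = card V - card Cs" using cs by (simp add: card_Diff_subset)
    moreover have "card Cs \<le> card V" using cs fin by (simp add: card_mono)
    ultimately show ?thesis by simp
  qed
  then show ?thesis using c1 c2 by simp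
qed

end
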